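(* Let $T$ be a tree with positive edge-lengths, let $\Sigma\subseteq V(T)$ be a set of sites and $s\in\Sigma$. For each vertex $v\in\mathrm{cell}_T(s,\Sigma)$, the path in $T$ from $s$ to $v$ is contained in the subgraph $T[\mathrm{cell}_T(s,\Sigma)]$ induced by $\mathrm{cell}_T(s,\Sigma)$. Likewise, for each $v\in \mathrm{cell}^<_T(s,\Sigma)$, the path in $T$ from $s$ to $v$ is contained in $T[\mathrm{cell}^<_T(s,\Sigma)]$.
   Context: $d_T$ is the shortest-path distance in $T$. For $s\in\Sigma$, $\mathrm{cell}_T(s,\Sigma)=\{x\in V(T)\mid d_T(s,x)\le d_T(s',x)\ \forall s'\in\Sigma\}$ and $\mathrm{cell}^<_T(s,\Sigma)=\{x\in V(T)\mid d_T(s,x)< d_T(s',x)\ \forall s'\in\Sigma\setminus\{s\}\}$. *)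

theory Defs
  imports Complex_Main
begin

definition wgraph :: "'a set \<Rightarrow> ('a \<Rightarrow> 'a \<Rightarrow> bool) \<Rightarrow> ('a \<Rightarrow> 'a \<Rightarrow> real) \<Rightarrow> bool" where
  "wgraph V E w \<longleftrightarrow> finite V \<and> (\<forall>x y. E x y \<longrightarrow> x \<in> V \<and> y \<in> V) \<and>
     (\<forall>x y. E x y \<longrightarrow> E y x) \<and> (\<forall>x. \<not> E x x) \<and> (\<forall>x y. E x y \<longrightarrow> w x y = w y x)"

definition walk :: "'a set \<Rightarrow> ('a \<Rightarrow> 'a \<Rightarrow> bool) \<Rightarrow> 'a list \<Rightarrow> bool" where
  "walk V E p \<longleftrightarrow> p \<noteq> [] \<and> set p \<subseteq> V \<and> (\<forall>i. Suc i < length p \<longrightarrow> E (p ! i) (p ! Suc i))"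

definition gpath :: "'a set \<Rightarrow> ('a \<Rightarrow> 'a \<Rightarrow> bool) \<Rightarrow> 'a list \<Rightarrow> bool" where
  "gpath V E p \<longleftrightarrow> walk V E p \<and> distinct p"

definition connected_graph :: "'a set \<Rightarrow> ('a \<Rightarrow> 'a \<Rightarrow> bool) \<Rightarrow> bool" where
  "connected_graph V E \<longleftrightarrow> (\<forall>u\<in>V. \<forall>v\<in>V. \<exists>p. walk V E p \<and> hd p = u \<and> last p = v)"

definition acyclic_graph :: "'a set \<Rightarrow> ('a \<Rightarrow> 'a \<Rightarrow> bool) \<Rightarrow> bool" where
  "acyclic_graph V E \<longleftrightarrow> \<not> (\<exists>c. gpath V E c \<and> length c \<ge> 3 \<and> E (last c) (hd c))"

definition tree :: "'a set \<Rightarrow> ('a \<Rightarrow> 'a \<Rightarrow> bool) \<Rightarrow> ('a \<Rightarrow> 'a \<Rightarrow> real) \<Rightarrow> bool" where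
  "tree V E w \<longleftrightarrow> wgraph V E w \<and> connected_graph V E \<and> acyclic_graph V E"

definition walk_length :: "('a \<Rightarrow> 'a \<Rightarrow> real) \<Rightarrow> 'a list \<Rightarrow> real" where
  "walk_length w p = (\<Sum>i<length p - 1. w (p ! i) (p ! Suc i))"

definition dist_T :: "'a set \<Rightarrow> ('a \<Rightarrow> 'a \<Rightarrow> bool) \<Rightarrow> ('a \<Rightarrow> 'a \<Rightarrow> real) \<Rightarrow> 'a \<Rightarrow> 'a \<Rightarrow> real" where
  "dist_T V E w u v = Inf {walk_length w p | p. walk V E p \<and> hd p = u \<and> last p = v}"

definition cell :: "'a set \<Rightarrow> ('a \<Rightarrow> 'a \<Rightarrow> bool) \<Rightarrow> ('a \<Rightarrow> 'a \<Rightarrow> real) \<Rightarrow> 'a \<Rightarrow> 'a set \<Rightarrow> 'a set" where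
  "cell V E w s \<Sigma> = {x \<in> V. \<forall>s'\<in>\<Sigma>. dist_T V E w s x \<le> dist_T V E w s' x}"

definition cell_strict :: "'a set \<Rightarrow> ('a \<Rightarrow> 'a \<Rightarrow> bool) \<Rightarrow> ('a \<Rightarrow> 'a \<Rightarrow> real) \<Rightarrow> 'a \<Rightarrow> 'a set \<Rightarrow> 'a set" where
  "cell_strict V E w s \<Sigma> = {x \<in> V. \<forall>s'\<in>\<Sigma> - {s}. dist_T V E w s x < dist_T V E w s' x}"

definition induced_edges :: "('a \<Rightarrow> 'a \<Rightarrow> bool) \<Rightarrow> 'a set \<Rightarrow> 'a \<Rightarrow> 'a \<Rightarrow> bool" where
  "induced_edges E C x y \<longleftrightarrow> E x y \<and> x \<in> C \<and> y \<in> C"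

end

theory Submission
  imports Defs
begin

lemma walk_single[simp]: "walk V E [x] \<longleftrightarrow> x \<in> V"
  by (simp add: walk_def)

lemma walk_Cons2[simp]: "walk V E (x # y # q) \<longleftrightarrow> x \<in> V \<and> E x y \<and> walk V E (y # q)"
proof
  assume h: "walk V E (x # y # q)"
  have all: "\<forall>i. Suc i < length (x # y # q) \<longrightarrow> E ((x # y # q) ! i) ((x # y # q) ! Suc i)"
    using h unfolding walk_def by blast
  have "E ((x # y # q) ! 0) ((x # y # q) ! Suc 0)" using all[rule_format, of 0] by simp
  then have "E x y" by simp
  moreover have "walk V E (y # q)" unfolding walk_def
  proof (intro conjI allI impI)
    fix i assume "Suc i < length (y # q)"
    then have "E ((x # y # q) ! Suc i) ((x # y # q) ! Suc (Suc i))" using all[rule_format, of "Suc i"] by simp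
    then show "E ((y # q) ! i) ((y # q) ! Suc i)" by simp
  qed (use h in \<open>auto simp: walk_def\<close>)
  ultimately show "x \<in> V \<and> E x y \<and> walk V E (y # q)" using h by (simp add: walk_def)
next
  assume h: "x \<in> V \<and> E x y \<and> walk V E (y # q)"
  show "walk V E (x # y # q)" unfolding walk_def
  proof (intro conjI allI impI)
    fix i assume i: "Suc i < length (x # y # q)"
    show "E ((x # y # q) ! i) ((x # y # q) ! Suc i)"
    proof (cases i)
      case 0 then show ?thesis using h by simp
    next
      case (Suc j) then show ?thesis using h i unfolding walk_def by auto
    qed
  qed (use h in \<open>auto simp: walk_def\<close>)
qed

lemma set_tl_sub: "set (tl l) \<subseteq> set l"
  by (cases l) auto

lemma walk_hdV: "walk V E (x # q) \<Longrightarrow> x \<in> V"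
  by (simp add: walk_def)

lemma wl_single[simp]: "walk_length w [x] = 0"
  by (simp add: walk_length_def)

lemma wl_Cons2[simp]: "walk_length w (x # y # q) = w x y + walk_length w (y # q)"
  unfolding walk_length_def
  by (simp only: length_Cons diff_Suc_1 sum.lessThan_Suc_shift nth_Cons_0 nth_Cons_Suc)

lemma wl_nonneg:
  assumes "\<forall>x y. E x y \<longrightarrow> w x y > 0" "walk V E q"
  shows "walk_length w q \<ge> 0"
  unfolding walk_length_def
proof (rule sum_nonneg)
  fix i assume "i \<in> {..<length q - 1}"
  then have "E (q ! i) (q ! Suc i)" using assms(2) unfolding walk_def by auto
  then show "w (q ! i) (q ! Suc i) \<ge> 0" using assms(1) by (simp add: less_imp_le)
qed

lemma walk_append: "walk V E (xs @ [x]) \<Longrightarrow> walk V E (x # ys) \<Longrightarrow> walk V E (xs @ x # ys)"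
proof (induction xs)
  case Nil then show ?case by simp
next
  case (Cons a xs)
  then show ?case by (cases xs) auto
qed

lemma wl_append: "walk_length w (xs @ x # ys) = walk_length w (xs @ [x]) + walk_length w (x # ys)"
proof (induction xs)
  case Nil then show ?case by simp
next
  case (Cons a xs)
  then show ?case by (cases xs) auto
qed

lemma walk_split: "walk V E (xs @ x # ys) \<Longrightarrow> walk V E (xs @ [x]) \<and> walk V E (x # ys)"
proof (induction xs)
  case Nil then show ?case by (cases ys) auto
next
  case (Cons a xs)
  then show ?case by (cases xs) auto
qed

lemma walk_rev:
  assumes sym: "\<forall>x y. E x y \<longrightarrow> E y x"
  shows "walk V E p \<Longrightarrow> walk V E (rev p)"
proof (induction p)
  case Nil then show ?case by (simp add: walk_def)
next
  case (Cons a p)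
  show ?case
  proof (cases p)
    case Nil then show ?thesis using Cons by simp
  next
    case (Cons b p'')
    have "walk V E (rev p'' @ [b])" using Cons \<open>walk V E (a # p)\<close> \<open>walk V E p \<Longrightarrow> walk V E (rev p)\<close> by simp
    moreover have "walk V E [b, a]" using Cons \<open>walk V E (a # p)\<close> sym by (auto dest: walk_hdV)
    ultimately have "walk V E (rev p'' @ b # [a])" by (rule walk_append)
    then show ?thesis using Cons by simp
  qed
qed

lemma walk_concat:
  assumes "walk V E xs" "walk V E ys" "last xs = hd ys"
  shows "walk V E (xs @ tl ys)"
proof -
  have xs: "xs = butlast xs @ [last xs]" using assms(1) by (simp add: walk_def)
  have ys: "ys = hd ys # tl ys" using assms(2) by (simp add: walk_def)
  have "walk V E (butlast xs @ last xs # tl ys)"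
    using walk_append[of V E "butlast xs" "last xs" "tl ys"] assms xs ys by metis
  then show ?thesis by (metis xs append.assoc append_Cons append_Nil)
qed

lemma walk_to_path:
  "walk V E q \<Longrightarrow> \<exists>r. gpath V E r \<and> hd r = hd q \<and> last r = last q \<and> set r \<subseteq> set q"
proof (induction q)
  case Nil then show ?case by (simp add: walk_def)
next
  case (Cons x q)
  show ?case
  proof (cases q)
    case Nil then show ?thesis using Cons by (intro exI[of _ "[x]"]) (simp add: gpath_def)
  next
    case (Cons y q')
    then have wq: "walk V E q" using Cons.prems by simp
    from Cons.IH[OF wq] obtain r where r: "gpath V E r" "hd r = hd q" "last r = last q" "set r \<subseteq> set q"
      by blast
    have rne: "r \<noteq> []" using r(1) by (simp add: gpath_def walk_def)
    show ?thesis
    proof (cases "x \<in> set r")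
      case True
      then obtain r1 r2 where rr: "r = r1 @ x # r2" by (meson split_list)
      have "walk V E (x # r2)" using r(1) rr walk_split by (metis gpath_def)
      moreover have "distinct (x # r2)" using r(1) rr by (simp add: gpath_def)
      ultimately show ?thesis using r rr Cons
        by (intro exI[of _ "x # r2"]) (auto simp: gpath_def)
    next
      case False
      obtain r' where r': "r = y # r'" using rne r(2) Cons by (cases r) auto
      have "x \<in> V" "E x y" using Cons.prems Cons by auto
      then have "walk V E (x # r)" using r(1) r' by (simp add: gpath_def)
      then show ?thesis using False r rne Cons
        by (intro exI[of _ "x # r"]) (auto simp: gpath_def)
    qed
  qed
qed

lemma distinct_hd_last:
  assumes "distinct p" "p \<noteq> []" "hd p = last p"
  shows "p = [hd p]"
proof (cases p)
  case Nil then show ?thesis using assms by simp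
next
  case (Cons a p')
  show ?thesis
  proof (cases p')
    case Nil then show ?thesis using Cons by simp
  next
    case (Cons b p'')
    then have "last p \<in> set p'" using \<open>p = a # p'\<close> by simp
    then show ?thesis using assms \<open>p = a # p'\<close> by auto
  qed
qed

lemma path_shortest:
  assumes tr: "tree V E w" and pos: "\<forall>x y. E x y \<longrightarrow> w x y > 0"
  shows "walk V E q \<Longrightarrow> gpath V E p \<Longrightarrow> hd p = hd q \<Longrightarrow> last p = last q
         \<Longrightarrow> walk_length w p \<le> walk_length w q"
proof (induction "length q" arbitrary: q p rule: less_induct)
  case less
  have sym: "\<forall>x y. E x y \<longrightarrow> E y x" using tr by (simp add: tree_def wgraph_def)
  have acyc: "acyclic_graph V E" using tr by (simp add: tree_def)
  have pne: "p \<noteq> []" and qne: "q \<noteq> []" using less.prems by (auto simp: gpath_def walk_def)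
  define s where "s = hd q"
  define v where "v = last q"
  show ?case
  proof (cases "s = v")
    case True
    then have "p = [hd p]" using distinct_hd_last[of p] less.prems pne s_def v_def
      by (simp add: gpath_def)
    then have "walk_length w p = 0" by (metis wl_single)
    then show ?thesis using wl_nonneg[OF pos less.prems(1)] by simp
  next
    case False
    obtain p1 where p1: "p = s # p1" using pne less.prems(3) s_def by (cases p) auto
    obtain q1 where q1: "q = s # q1" using qne s_def by (cases q) auto
    have "p1 \<noteq> []" using p1 False less.prems(4) v_def by auto
    then obtain a p'' where pa: "p = s # a # p''" using p1 by (cases p1) auto
    have "q1 \<noteq> []" using q1 False v_def by auto
    then obtain b q'' where qb: "q = s # b # q''" using q1 by (cases q1) auto
    have wq: "walk V E (b # q'')" and Esb: "E s b" using less.prems(1) qb by auto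
    have wp: "walk V E (a # p'')" and Esa: "E s a" and sV: "s \<in> V"
      using less.prems(2) pa by (auto simp: gpath_def)
    have dp: "distinct (s # a # p'')" using less.prems(2) pa by (simp add: gpath_def)
    have lastq: "last (b # q'') = v" using qb v_def by simp
    have lastp: "last (a # p'') = v" using pa less.prems(4) v_def by simp
    show ?thesis
    proof (cases "s \<in> set (b # q'')")
      case True
      then obtain q1 q2 where qs: "b # q'' = q1 @ s # q2" by (meson split_list)
      have qeq: "q = (s # q1) @ s # q2" using qb qs by simp
      have w2: "walk V E (s # q2)" and w1: "walk V E ((s # q1) @ [s])"
        using walk_split[of V E "s # q1" s q2] less.prems(1) qeq by auto
      have len: "length (s # q2) < length q" using qeq by simp
      have h1: "hd p = hd (s # q2)" using less.prems(3) s_def by simp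
      have h2: "last p = last (s # q2)" using less.prems(4) qeq by simp
      have "walk_length w p \<le> walk_length w (s # q2)"
        by (rule less.hyps[OF len w2 less.prems(2) h1 h2])
      also have "\<dots> \<le> walk_length w q"
        using wl_append[of w "s # q1" s q2] qeq wl_nonneg[OF pos w1] by simp
      finally show ?thesis .
    next
      case sn: False
      show ?thesis
      proof (cases "a = b")
        case True
        have gp: "gpath V E (a # p'')" using wp dp by (simp add: gpath_def)
        have "walk_length w (a # p'') \<le> walk_length w (b # q'')"
          using less.hyps[of "b # q''" "a # p''"] qb wq gp True lastq lastp by simp
        then show ?thesis using pa qb True by simp
      next
        case False
        have wr: "walk V E (rev (a # p''))" using walk_rev[OF sym wp] .
        have hr: "hd (rev (a # p'')) = v" using lastp by (simp add: hd_append hd_rev split: if_splits)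
        define W where "W = (b # q'') @ tl (rev (a # p''))"
        have wW: "walk V E W" unfolding W_def using walk_concat[OF wq wr] lastq hr by simp
        have lW: "last W = a"
        proof (cases "tl (rev (a # p'')) = []")
          case True
          then have "p'' = []" by (cases "rev p''") auto
          then show ?thesis using True W_def lastq lastp by simp
        next
          case False
          then have "last W = last (tl (rev (a # p'')))" unfolding W_def by simp
          also have "\<dots> = last (rev (a # p''))"
            using False by (metis last_tl)
          finally show ?thesis by simp
        qed
        have sW: "s \<notin> set W" unfolding W_def using sn dp
          using set_tl_sub[of "rev (a # p'')"] by auto
        obtain r where r: "gpath V E r" "hd r = b" "last r = a" "set r \<subseteq> set W"
          using walk_to_path[OF wW] lW W_def by auto
        have rne: "r \<noteq> []" using r(1) by (simp add: gpath_def walk_def)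
        obtain r' where r': "r = b # r'" using rne r(2) by (cases r) auto
        have "r' \<noteq> []" using r' r(3) False by auto
        have sr: "s \<notin> set r" using r(4) sW by auto
        have "gpath V E (s # r)" using r(1) r' sV Esb sr by (simp add: gpath_def)
        moreover have "length (s # r) \<ge> 3" using r' \<open>r' \<noteq> []\<close> by (cases r') auto
        moreover have "E (last (s # r)) (hd (s # r))" using rne r(3) Esa sym by simp
        ultimately show ?thesis using acyc unfolding acyclic_graph_def by blast
      qed
    qed
  qed
qed

lemma dist_le:
  assumes pos: "\<forall>x y. E x y \<longrightarrow> w x y > 0" and "walk V E p"
  shows "dist_T V E w (hd p) (last p) \<le> walk_length w p"
  unfolding dist_T_def
proof (rule cInf_lower)
  show "walk_length w p \<in> {walk_length w q |q. walk V E q \<and> hd q = hd p \<and> last q = last p}"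
    using assms by blast
  show "bdd_below {walk_length w q |q. walk V E q \<and> hd q = hd p \<and> last q = last p}"
    using wl_nonneg[OF pos] by (intro bdd_belowI[of _ 0]) auto
qed

lemma dist_ge:
  assumes "connected_graph V E" "u \<in> V" "v \<in> V"
    and "\<And>q. walk V E q \<Longrightarrow> hd q = u \<Longrightarrow> last q = v \<Longrightarrow> c \<le> walk_length w q"
  shows "c \<le> dist_T V E w u v"
  unfolding dist_T_def
proof (rule cInf_greatest)
  show "{walk_length w p |p. walk V E p \<and> hd p = u \<and> last p = v} \<noteq> {}"
    using assms(1-3) unfolding connected_graph_def by blast
qed (use assms(4) in blast)

lemma dist_path:
  assumes tr: "tree V E w" and pos: "\<forall>x y. E x y \<longrightarrow> w x y > 0" and gp: "gpath V E p"
  shows "dist_T V E w (hd p) (last p) = walk_length w p"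
proof (rule antisym)
  show "dist_T V E w (hd p) (last p) \<le> walk_length w p"
    using dist_le[OF pos] gp by (simp add: gpath_def)
  have "p \<noteq> []" "set p \<subseteq> V" using gp by (auto simp: gpath_def walk_def)
  then show "walk_length w p \<le> dist_T V E w (hd p) (last p)"
    using tr path_shortest[OF tr pos _ gp]
    by (intro dist_ge) (auto simp: tree_def)
qed

lemma dist_tri:
  assumes tr: "tree V E w" and pos: "\<forall>x y. E x y \<longrightarrow> w x y > 0"
    and "a \<in> V" "b \<in> V" "c \<in> V"
  shows "dist_T V E w a c \<le> dist_T V E w a b + dist_T V E w b c"
proof -
  have conn: "connected_graph V E" using tr by (simp add: tree_def)
  have "dist_T V E w a c - dist_T V E w a b \<le> dist_T V E w b c"
  proof (rule dist_ge[OF conn assms(4,5)])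
    fix q2 assume q2: "walk V E q2" "hd q2 = b" "last q2 = c"
    have "dist_T V E w a c - walk_length w q2 \<le> dist_T V E w a b"
    proof (rule dist_ge[OF conn assms(3,4)])
      fix q1 assume q1: "walk V E q1" "hd q1 = a" "last q1 = b"
      have wc: "walk V E (q1 @ tl q2)" using walk_concat[OF q1(1) q2(1)] q1 q2 by simp
      have q2ne: "q2 \<noteq> []" and q1ne: "q1 \<noteq> []" using q1 q2 by (auto simp: walk_def)
      have hd: "hd (q1 @ tl q2) = a" using q1 q1ne by simp
      have lst: "last (q1 @ tl q2) = c"
        using q1 q2 q2ne by (cases "tl q2 = []") (auto simp: last_tl, metis last_ConsL list.collapse)
      have q1e: "q1 = butlast q1 @ [b]" using q1(3) q1ne append_butlast_last_id by metis
      have q2e: "q2 = b # tl q2" using q2(2) q2ne list.collapse by metis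
      have "walk_length w (q1 @ tl q2) = walk_length w q1 + walk_length w q2"
        using wl_append[of w "butlast q1" b "tl q2"] q1e q2e
        by (metis append.assoc append_Cons append_Nil)
      then show "dist_T V E w a c - walk_length w q2 \<le> walk_length w q1"
        using dist_le[OF pos wc] hd lst by simp
    qed
    then show "dist_T V E w a c - dist_T V E w a b \<le> walk_length w q2" by simp
  qed
  then show ?thesis by simp
qed

lemma on_path:
  assumes tr: "tree V E w" and pos: "\<forall>x y. E x y \<longrightarrow> w x y > 0"
    and gp: "gpath V E p" and x: "x \<in> set p"
  shows "x \<in> V \<and> dist_T V E w (hd p) x + dist_T V E w x (last p) = dist_T V E w (hd p) (last p)"
proof -
  obtain p1 p2 where pe: "p = p1 @ x # p2" using x by (meson split_list)
  have w: "walk V E (p1 @ [x])" "walk V E (x # p2)"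
    using walk_split[of V E p1 x p2] gp pe by (auto simp: gpath_def)
  have g1: "gpath V E (p1 @ [x])" and g2: "gpath V E (x # p2)"
    using w gp pe by (auto simp: gpath_def)
  have "dist_T V E w (hd p) x = walk_length w (p1 @ [x])"
    using dist_path[OF tr pos g1] pe by (cases p1) auto
  moreover have "dist_T V E w x (last p) = walk_length w (x # p2)"
    using dist_path[OF tr pos g2] pe by simp
  moreover have "dist_T V E w (hd p) (last p) = walk_length w p"
    using dist_path[OF tr pos gp] .
  ultimately show ?thesis using wl_append[of w p1 x p2] pe gp x
    by (auto simp: gpath_def walk_def)
qed

lemma gpath_sub:
  assumes "gpath V E p" "set p \<subseteq> C"
  shows "gpath C (induced_edges E C) p"
  using assms unfolding gpath_def walk_def induced_edges_def
  by (auto intro!: nth_mem[THEN subsetD[OF assms(2)]])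

theorem lemma2:
  fixes V :: "'a set" and E :: "'a \<Rightarrow> 'a \<Rightarrow> bool" and w :: "'a \<Rightarrow> 'a \<Rightarrow> real"
    and \<Sigma> :: "'a set" and s :: 'a
  assumes "tree V E w"
    and "\<forall>x y. E x y \<longrightarrow> w x y > 0"
    and "\<Sigma> \<subseteq> V" and "s \<in> \<Sigma>"
  shows "(\<forall>v \<in> cell V E w s \<Sigma>. \<forall>p. gpath V E p \<and> hd p = s \<and> last p = v \<longrightarrow>
            gpath (cell V E w s \<Sigma>) (induced_edges E (cell V E w s \<Sigma>)) p)
       \<and> (\<forall>v \<in> cell_strict V E w s \<Sigma>. \<forall>p. gpath V E p \<and> hd p = s \<and> last p = v \<longrightarrow>
            gpath (cell_strict V E w s \<Sigma>) (induced_edges E (cell_strict V E w s \<Sigma>)) p)"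
proof (intro conjI ballI allI impI)
  let ?d = "dist_T V E w"
  fix v p assume v: "v \<in> cell V E w s \<Sigma>" and p: "gpath V E p \<and> hd p = s \<and> last p = v"
  have "set p \<subseteq> cell V E w s \<Sigma>"
  proof
    fix x assume x: "x \<in> set p"
    have h: "x \<in> V" "?d s x + ?d x v = ?d s v"
      using on_path[OF assms(1,2) _ x] p by auto
    have "\<forall>s'\<in>\<Sigma>. ?d s x \<le> ?d s' x"
    proof
      fix s' assume s': "s' \<in> \<Sigma>"
      have "?d s v \<le> ?d s' v" using v s' by (simp add: cell_def)
      moreover have "?d s' v \<le> ?d s' x + ?d x v"
        using dist_tri[OF assms(1,2)] s' assms(3) h(1) v by (auto simp: cell_def)
      ultimately show "?d s x \<le> ?d s' x" using h by simp
    qed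
    then show "x \<in> cell V E w s \<Sigma>" using h by (simp add: cell_def)
  qed
  then show "gpath (cell V E w s \<Sigma>) (induced_edges E (cell V E w s \<Sigma>)) p"
    using gpath_sub p by blast
next
  let ?d = "dist_T V E w"
  fix v p assume v: "v \<in> cell_strict V E w s \<Sigma>" and p: "gpath V E p \<and> hd p = s \<and> last p = v"
  have "set p \<subseteq> cell_strict V E w s \<Sigma>"
  proof
    fix x assume x: "x \<in> set p"
    have h: "x \<in> V" "?d s x + ?d x v = ?d s v"
      using on_path[OF assms(1,2) _ x] p by auto
    have "\<forall>s'\<in>\<Sigma> - {s}. ?d s x < ?d s' x"
    proof
      fix s' assume s': "s' \<in> \<Sigma> - {s}"
      have "?d s v < ?d s' v" using v s' by (simp add: cell_strict_def)
      moreover have "?d s' v \<le> ?d s' x + ?d x v"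
        using dist_tri[OF assms(1,2)] s' assms(3) h(1) v by (auto simp: cell_strict_def)
      ultimately show "?d s x < ?d s' x" using h by simp
    qed
    then show "x \<in> cell_strict V E w s \<Sigma>" using h by (simp add: cell_strict_def)
  qed
  then show "gpath (cell_strict V E w s \<Sigma>) (induced_edges E (cell_strict V E w s \<Sigma>)) p"
    using gpath_sub p by blast
qed

end
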